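(* Let $G_0$ be a fixed $n\times l$ binary matrix, $G_1$ a fixed $n\times k$ binary matrix, $\mathbf m\in\{0,1\}^k$ fixed, and let $t_0=\lfloor (d_0-1)/2\rfloor$. For every $u$ with $1\le u\le d_0+t_0$, $$P(E=0\mid U=u)=\frac12\cdot\frac{\sum_{w=d_0}^{u}B_{0,w}\binom{n-w}{u-w}}{\binom{n}{u}}.$$
   Context: All arithmetic is over $\mathrm{GF}(2)$. $\mathcal C_0^{\perp}=\{\mathbf x\in\{0,1\}^n: G_0^T\mathbf x=\mathbf 0\}$; $B_{0,w}$ is the number of vectors of Hamming weight $w$ in $\mathcal C_0^\perp$, and $d_0$ is the minimum Hamming weight of a nonzero vector of $\mathcal C_0^\perp$ (empty sums are $0$). Defect model: each of the $n$ memory cells is independently defective with probability $\beta\in(0,1)$; a defective cell is stuck at $0$ or at $1$, each with probability $1/2$, independently. Let $\mathcal U$ be the set of defect positions, $U=|\mathcal U|$, $\mathbf s^{\mathcal U}$ the vector of stuck-at values; conditionally on $U=u$, $\mathcal U$ is a uniform random $u$-subset and $\mathbf s^{\mathcal U}$ is uniform on $\{0,1\}^u$. For a matrix $M$ (resp. vector $\mathbf v$) with rows indexed by $\{1,\dots,n\}$, $M^{\mathcal U}$ (resp. $\mathbf v^{\mathcal U}$) denotes the rows indexed by $\mathcal U$. Encoding: with $\mathbf b^{\mathcal U}=(G_1\mathbf m)^{\mathcal U}+\mathbf s^{\mathcal U}$, look for $\mathbf d\in\{0,1\}^l$ with $G_0^{\mathcal U}\mathbf d=\mathbf b^{\mathcal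 U}$; $E=1$ if such $\mathbf d$ exists and $E=0$ (encoding failure) otherwise. *)

theory Defs
  imports "HOL-Probability.Probability" "HOL-Library.Z2"
begin

text \<open>Binary vectors of length n are functions nat => bit that vanish outside {0..<n};
  an n x l binary matrix is a function nat => nat => bit, entry (i,j) for i<n, j<l.\<close>

definition bvecs :: "nat \<Rightarrow> (nat \<Rightarrow> bit) set" where
  "bvecs n = {x. \<forall>i\<ge>n. x i = 0}"

definition hweight :: "nat \<Rightarrow> (nat \<Rightarrow> bit) \<Rightarrow> nat" where
  "hweight n x = card {i. i < n \<and> x i \<noteq> 0}"

definition dual_code :: "nat \<Rightarrow> nat \<Rightarrow> (nat \<Rightarrow> nat \<Rightarrow> bit) \<Rightarrow> (nat \<Rightarrow> bit) set" where
  "dual_code n l G0 = {x \<in> bvecs n. \<forall>j<l. (\<Sum>i<n. G0 i j * x i) = 0}"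

definition Bw :: "nat \<Rightarrow> nat \<Rightarrow> (nat \<Rightarrow> nat \<Rightarrow> bit) \<Rightarrow> nat \<Rightarrow> nat" where
  "Bw n l G0 w = card {x \<in> dual_code n l G0. hweight n x = w}"

definition dmin :: "nat \<Rightarrow> nat \<Rightarrow> (nat \<Rightarrow> nat \<Rightarrow> bit) \<Rightarrow> nat" where
  "dmin n l G0 = Min {hweight n x | x. x \<in> dual_code n l G0 \<and> x \<noteq> (\<lambda>_. 0)}"

text \<open>State of one cell: None = not defective, Some b = stuck at b.
  Defective with probability beta; stuck value uniform on {0,1}.\<close>
definition cell_pmf :: "real \<Rightarrow> bit option pmf" where
  "cell_pmf \<beta> = bind_pmf (bernoulli_pmf \<beta>)
     (\<lambda>dfct. if dfct then map_pmf Some (pmf_of_set (UNIV :: bit set)) else return_pmf None)"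

definition defect_pmf :: "nat \<Rightarrow> real \<Rightarrow> (nat \<Rightarrow> bit option) pmf" where
  "defect_pmf n \<beta> = Pi_pmf {0..<n} None (\<lambda>_. cell_pmf \<beta>)"

definition defects :: "(nat \<Rightarrow> bit option) \<Rightarrow> nat set" where
  "defects \<omega> = {i. \<omega> i \<noteq> None}"

text \<open>E = 1 iff some d in {0,1}^l satisfies G_0^U d = (G_1 m)^U + s^U.\<close>
definition encodable :: "nat \<Rightarrow> nat \<Rightarrow> (nat \<Rightarrow> nat \<Rightarrow> bit) \<Rightarrow> (nat \<Rightarrow> nat \<Rightarrow> bit)
    \<Rightarrow> (nat \<Rightarrow> bit) \<Rightarrow> (nat \<Rightarrow> bit option) \<Rightarrow> bool" where
  "encodable l k G0 G1 m \<omega> \<longleftrightarrow>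
     (\<exists>d \<in> bvecs l. \<forall>i \<in> defects \<omega>.
        (\<Sum>j<l. G0 i j * d j) = (\<Sum>j<k. G1 i j * m j) + the (\<omega> i))"

end

theory Submission
  imports Defs
begin


declare mult_bit_eq_and[simp del] add_bit_eq_xor[simp del]

lemma bit_self_add[simp]: "(a::bit) + a = 0"
  by (cases a) simp_all

lemma sep:
  fixes G :: "nat \<Rightarrow> nat \<Rightarrow> bit"
  assumes "finite U"
  shows "\<not>(\<exists>d. \<forall>i\<in>U. (\<Sum>j<L. G i j * d j) = b i) \<Longrightarrow>
    \<exists>y. (\<forall>j<L. (\<Sum>i\<in>U. y i * G i j) = 0) \<and> (\<Sum>i\<in>U. y i * b i) = 1"
proof (induction L arbitrary: b)
  case 0
  then obtain i0 where i0: "i0 \<in> U" "b i0 = 1" by auto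
  define y where "y = (\<lambda>i. if i = i0 then (1::bit) else 0)"
  have "(\<Sum>i\<in>U. y i * b i) = (\<Sum>i\<in>U. if i = i0 then b i else 0)"
    by (rule sum.cong) (auto simp: y_def)
  also have "\<dots> = 1" using i0 assms by simp
  finally show ?case by auto
next
  case (Suc L)
  have n1: "\<not>(\<exists>d. \<forall>i\<in>U. (\<Sum>j<L. G i j * d j) = b i)"
  proof
    assume "\<exists>d. \<forall>i\<in>U. (\<Sum>j<L. G i j * d j) = b i"
    then obtain d where d: "\<forall>i\<in>U. (\<Sum>j<L. G i j * d j) = b i" by auto
    have "\<forall>i\<in>U. (\<Sum>j<Suc L. G i j * (d(L:=0)) j) = b i"
    proof
      fix i assume "i \<in> U"
      have "(\<Sum>j<Suc L. G i j * (d(L:=0)) j) = (\<Sum>j<L. G i j * (d(L:=0)) j) + G i L * 0"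
        by (simp only: sum.lessThan_Suc fun_upd_same)
      also have "(\<Sum>j<L. G i j * (d(L:=0)) j) = (\<Sum>j<L. G i j * d j)"
        by (rule sum.cong) auto
      finally show "(\<Sum>j<Suc L. G i j * (d(L:=0)) j) = b i" using d \<open>i \<in> U\<close> by simp
    qed
    with Suc.prems show False by blast
  qed
  have n2: "\<not>(\<exists>d. \<forall>i\<in>U. (\<Sum>j<L. G i j * d j) = b i + G i L)"
  proof
    assume "\<exists>d. \<forall>i\<in>U. (\<Sum>j<L. G i j * d j) = b i + G i L"
    then obtain d where d: "\<forall>i\<in>U. (\<Sum>j<L. G i j * d j) = b i + G i L" by auto
    have "\<forall>i\<in>U. (\<Sum>j<Suc L. G i j * (d(L:=1)) j) = b i"
    proof
      fix i assume "i \<in> U"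
      have "(\<Sum>j<Suc L. G i j * (d(L:=1)) j) = (\<Sum>j<L. G i j * (d(L:=1)) j) + G i L * 1"
        by (simp only: sum.lessThan_Suc fun_upd_same)
      also have "(\<Sum>j<L. G i j * (d(L:=1)) j) = (\<Sum>j<L. G i j * d j)"
        by (rule sum.cong) auto
      finally show "(\<Sum>j<Suc L. G i j * (d(L:=1)) j) = b i" using d \<open>i \<in> U\<close> 
        by (simp only: mult_1_right add.assoc bit_self_add add_0_right)
    qed
    with Suc.prems show False by blast
  qed
  obtain y1 where y1: "\<forall>j<L. (\<Sum>i\<in>U. y1 i * G i j) = 0" "(\<Sum>i\<in>U. y1 i * b i) = 1"
    using Suc.IH[OF n1] by blast
  obtain y2 where y2: "\<forall>j<L. (\<Sum>i\<in>U. y2 i * G i j) = 0" "(\<Sum>i\<in>U. y2 i * (b i + G i L)) = 1"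
    using Suc.IH[OF n2] by blast
  have y2s: "(\<Sum>i\<in>U. y2 i * b i) + (\<Sum>i\<in>U. y2 i * G i L) = 1"
    using y2(2) by (simp add: distrib_left sum.distrib)
  show ?case
  proof (cases "(\<Sum>i\<in>U. y1 i * G i L) = 0")
    case True
    then show ?thesis using y1 by (intro exI[of _ y1]) (auto simp: less_Suc_eq)
  next
    case F1: False
    show ?thesis
    proof (cases "(\<Sum>i\<in>U. y2 i * G i L) = 0")
      case True
      then show ?thesis using y2 y2s by (intro exI[of _ y2]) (auto simp: less_Suc_eq)
    next
      case False
      then have "(\<Sum>i\<in>U. y2 i * b i) = 0" using y2s by simp
      then show ?thesis using y1 y2 F1 False
        by (intro exI[of _ "\<lambda>i. y1 i + y2 i"]) (auto simp: less_Suc_eq distrib_right sum.distrib)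
    qed
  qed
qed

lemma enc_iff_U:
  fixes G0 :: "nat \<Rightarrow> nat \<Rightarrow> bit"
  assumes U: "finite U" "U \<subseteq> {..<n}"
  shows "(\<exists>d. \<forall>i\<in>U. (\<Sum>j<l. G0 i j * d j) = b i) \<longleftrightarrow>
    (\<forall>x\<in>dual_code n l G0. {i. x i \<noteq> 0} \<subseteq> U \<longrightarrow> (\<Sum>i\<in>U. x i * b i) = 0)"
proof
  assume "\<exists>d. \<forall>i\<in>U. (\<Sum>j<l. G0 i j * d j) = b i"
  then obtain d where d: "\<forall>i\<in>U. (\<Sum>j<l. G0 i j * d j) = b i" by auto
  show "\<forall>x\<in>dual_code n l G0. {i. x i \<noteq> 0} \<subseteq> U \<longrightarrow> (\<Sum>i\<in>U. x i * b i) = 0"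
  proof (intro ballI impI)
    fix x assume x: "x \<in> dual_code n l G0" and sx: "{i. x i \<noteq> 0} \<subseteq> U"
    have z: "(\<Sum>i\<in>U. G0 i j * x i) = 0" if "j < l" for j
    proof -
      have "(\<Sum>i\<in>U. G0 i j * x i) = (\<Sum>i<n. G0 i j * x i)"
        by (rule sum.mono_neutral_left) (use U sx in auto)
      also have "\<dots> = 0" using x that unfolding dual_code_def by auto
      finally show ?thesis .
    qed
    have "(\<Sum>i\<in>U. x i * b i) = (\<Sum>i\<in>U. x i * (\<Sum>j<l. G0 i j * d j))"
      using d by (intro sum.cong) auto
    also have "\<dots> = (\<Sum>i\<in>U. \<Sum>j<l. (G0 i j * x i) * d j)"
      by (simp add: sum_distrib_left mult_ac)
    also have "\<dots> = (\<Sum>j<l. \<Sum>i\<in>U. (G0 i j * x i) * d j)"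
      by (rule sum.swap)
    also have "\<dots> = (\<Sum>j<l. (\<Sum>i\<in>U. G0 i j * x i) * d j)"
      by (simp add: sum_distrib_right)
    also have "\<dots> = 0" using z by simp
    finally show "(\<Sum>i\<in>U. x i * b i) = 0" .
  qed
next
  assume R: "\<forall>x\<in>dual_code n l G0. {i. x i \<noteq> 0} \<subseteq> U \<longrightarrow> (\<Sum>i\<in>U. x i * b i) = 0"
  show "\<exists>d. \<forall>i\<in>U. (\<Sum>j<l. G0 i j * d j) = b i"
  proof (rule ccontr)
    assume "\<not> (\<exists>d. \<forall>i\<in>U. (\<Sum>j<l. G0 i j * d j) = b i)"
    from sep[OF U(1) this] obtain y where
      y: "\<forall>j<l. (\<Sum>i\<in>U. y i * G0 i j) = 0" "(\<Sum>i\<in>U. y i * b i) = 1" by blast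
    define x where "x = (\<lambda>i. if i \<in> U then y i else 0)"
    have "x \<in> bvecs n" using U unfolding x_def bvecs_def by auto
    moreover have "(\<Sum>i<n. G0 i j * x i) = 0" if "j < l" for j
    proof -
      have "(\<Sum>i<n. G0 i j * x i) = (\<Sum>i\<in>U. G0 i j * x i)"
        by (rule sum.mono_neutral_right) (use U in \<open>auto simp: x_def\<close>)
      also have "\<dots> = (\<Sum>i\<in>U. y i * G0 i j)" by (rule sum.cong) (auto simp: x_def mult.commute)
      finally show ?thesis using y that by simp
    qed
    ultimately have "x \<in> dual_code n l G0" unfolding dual_code_def by auto
    moreover have "{i. x i \<noteq> 0} \<subseteq> U" by (auto simp: x_def split: if_splits)
    moreover have "(\<Sum>i\<in>U. x i * b i) = 1"
      using y(2) by (metis (no_types, lifting) sum.cong x_def)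
    ultimately show False using R by fastforce
  qed
qed

lemma encodable_iff:
  "encodable l k G0 G1 m \<omega> \<longleftrightarrow>
    (\<exists>d. \<forall>i\<in>defects \<omega>. (\<Sum>j<l. G0 i j * d j) = (\<Sum>j<k. G1 i j * m j) + the (\<omega> i))"
proof
  assume "encodable l k G0 G1 m \<omega>" then show "\<exists>d. \<forall>i\<in>defects \<omega>. (\<Sum>j<l. G0 i j * d j) = (\<Sum>j<k. G1 i j * m j) + the (\<omega> i)"
    unfolding encodable_def by blast
next
  assume "\<exists>d. \<forall>i\<in>defects \<omega>. (\<Sum>j<l. G0 i j * d j) = (\<Sum>j<k. G1 i j * m j) + the (\<omega> i)"
  then obtain d where d: "\<forall>i\<in>defects \<omega>. (\<Sum>j<l. G0 i j * d j) = (\<Sum>j<k. G1 i j * m j) + the (\<omega> i)" by blast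
  define d' where "d' = (\<lambda>j. if j < l then d j else 0)"
  have "d' \<in> bvecs l" by (auto simp: d'_def bvecs_def)
  moreover have "(\<Sum>j<l. G0 i j * d' j) = (\<Sum>j<l. G0 i j * d j)" for i
    by (rule sum.cong) (auto simp: d'_def)
  ultimately show "encodable l k G0 G1 m \<omega>" unfolding encodable_def using d by metis
qed

lemma bit_UNIV: "(UNIV::bit set) = {0,1}"
proof -
  have "x \<in> {0,1}" for x :: bit by (cases x) auto
  then show ?thesis by auto
qed

lemma bit_finite[simp]: "finite (UNIV::bit set)" by (simp add: bit_UNIV)
lemma bit_card: "card (UNIV::bit set) = 2" by (simp add: bit_UNIV)

lemma finite_bvecs: "finite (bvecs n)"
proof -
  have "bvecs n = {f. \<forall>x. (x \<in> {..<n} \<longrightarrow> f x \<in> (UNIV::bit set)) \<and> (x \<notin> {..<n} \<longrightarrow> f x = 0)}"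
    by (auto simp: bvecs_def)
  moreover have "finite {f. \<forall>x. (x \<in> {..<n} \<longrightarrow> f x \<in> (UNIV::bit set)) \<and> (x \<notin> {..<n} \<longrightarrow> f x = 0)}"
    by (rule finite_set_of_finite_funs) auto
  ultimately show ?thesis by simp
qed

lemma finite_dual: "finite (dual_code n l G0)"
  using finite_bvecs[of n] unfolding dual_code_def by (rule finite_subset[rotated]) auto

lemma supp_bvecs: "x \<in> bvecs n \<Longrightarrow> {i. x i \<noteq> 0} \<subseteq> {..<n}"
  unfolding bvecs_def by (auto simp del: bit_not_zero_iff) (meson not_less)

lemma hweight_supp: "x \<in> bvecs n \<Longrightarrow> hweight n x = card {i. x i \<noteq> 0}"
proof -
  assume "x \<in> bvecs n"
  then have "{i. i < n \<and> x i \<noteq> 0} = {i. x i \<noteq> 0}" using supp_bvecs[of x n] by blast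
  then show ?thesis unfolding hweight_def by simp
qed

lemma hweight_zero: "x \<in> bvecs n \<Longrightarrow> hweight n x = 0 \<Longrightarrow> x = (\<lambda>_. 0)"
proof -
  assume x: "x \<in> bvecs n" and h: "hweight n x = 0"
  have "finite {i. x i \<noteq> 0}" using supp_bvecs[OF x] finite_subset by blast
  then have "{i. x i \<noteq> 0} = {}" using h hweight_supp[OF x] by simp
  then show ?thesis by (auto simp del: bit_not_zero_iff)
qed

lemma dual_add: "x \<in> dual_code n l G0 \<Longrightarrow> y \<in> dual_code n l G0 \<Longrightarrow> (\<lambda>i. x i + y i) \<in> dual_code n l G0"
  unfolding dual_code_def bvecs_def by (auto simp: distrib_left sum.distrib)

lemma dmin_le:
  assumes "x \<in> dual_code n l G0" "x \<noteq> (\<lambda>_. 0)"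
  shows "dmin n l G0 \<le> hweight n x"
  unfolding dmin_def
proof (rule Min_le)
  show "finite {hweight n x |x. x \<in> dual_code n l G0 \<and> x \<noteq> (\<lambda>_. 0)}"
    using finite_dual[of n l G0] by simp
qed (use assms in auto)

lemma dmin_pos:
  assumes "\<exists>x \<in> dual_code n l G0. x \<noteq> (\<lambda>_. 0)"
  shows "1 \<le> dmin n l G0"
proof -
  let ?S = "{hweight n x |x. x \<in> dual_code n l G0 \<and> x \<noteq> (\<lambda>_. 0)}"
  have "finite ?S" using finite_dual[of n l G0] by simp
  moreover have "?S \<noteq> {}" using assms by auto
  ultimately have "dmin n l G0 \<in> ?S" unfolding dmin_def by (rule Min_in)
  then obtain x where "x \<in> dual_code n l G0" "x \<noteq> (\<lambda>_. 0)" "dmin n l G0 = hweight n x" by auto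
  then show ?thesis using hweight_zero[of x n] unfolding dual_code_def by (cases "hweight n x") auto
qed

lemma unique_cw:
  assumes U: "finite U" "U \<subseteq> {..<n}"
    and cu: "card U \<le> dmin n l G0 + (dmin n l G0 - 1) div 2"
    and x: "x \<in> dual_code n l G0" "x \<noteq> (\<lambda>_. 0)" "{i. x i \<noteq> 0} \<subseteq> U"
    and y: "y \<in> dual_code n l G0" "y \<noteq> (\<lambda>_. 0)" "{i. y i \<noteq> 0} \<subseteq> U"
  shows "x = y"
proof (rule ccontr)
  assume ne: "x \<noteq> y"
  define z where "z = (\<lambda>i. x i + y i)"
  have z: "z \<in> dual_code n l G0" using dual_add[OF x(1) y(1)] by (simp add: z_def)
  have znz: "z \<noteq> (\<lambda>_. 0)"
  proof
    assume "z = (\<lambda>_. 0)"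
    then have h: "x i + y i = 0" for i unfolding z_def by meson
    have "x i = y i" for i using h[of i] by (cases "x i"; cases "y i") auto
    then show False using ne by blast
  qed
  define A where "A = {i. x i \<noteq> 0}"
  define B where "B = {i. y i \<noteq> 0}"
  define C where "C = {i. z i \<noteq> 0}"
  have fin: "finite A" "finite B" using x(3) y(3) U(1) finite_subset unfolding A_def B_def by blast+
  have "C \<subseteq> (A \<union> B) - (A \<inter> B)"
  proof
    fix i assume "i \<in> C"
    then show "i \<in> (A \<union> B) - (A \<inter> B)" unfolding A_def B_def C_def z_def
      by (cases "x i"; cases "y i") auto
  qed
  then have "card C \<le> card ((A \<union> B) - (A \<inter> B))" using fin by (intro card_mono) auto
  also have "\<dots> = card (A \<union> B) - card (A \<inter> B)" using fin by (intro card_Diff_subset) auto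
  finally have c1: "card C \<le> card (A \<union> B) - card (A \<inter> B)" .
  have c2: "card A + card B = card (A \<union> B) + card (A \<inter> B)" using card_Un_Int fin by blast
  have c3: "card (A \<union> B) \<le> card U" using x(3) y(3) U(1) unfolding A_def B_def by (intro card_mono) auto
  have "card (A \<inter> B) \<le> card (A \<union> B)" using fin by (intro card_mono) auto
  with c1 c2 c3 have tot: "card A + card B + card C \<le> 2 * card U" by linarith
  have xb: "x \<in> bvecs n" "y \<in> bvecs n" "z \<in> bvecs n" using x(1) y(1) z unfolding dual_code_def by auto
  have "dmin n l G0 \<le> card A" using dmin_le[OF x(1,2)] hweight_supp[OF xb(1)] A_def by simp
  moreover have "dmin n l G0 \<le> card B" using dmin_le[OF y(1,2)] hweight_supp[OF xb(2)] B_def by simp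
  moreover have "dmin n l G0 \<le> card C" using dmin_le[OF z znz] hweight_supp[OF xb(3)] C_def by simp
  moreover have "1 \<le> dmin n l G0" using dmin_pos x by blast
  ultimately show False using tot cu by linarith
qed



definition DU :: "nat set \<Rightarrow> (nat \<Rightarrow> bit option) set" where
  "DU U = {\<omega>. defects \<omega> = U}"

lemma card_DU:
  assumes "finite U"
  shows "finite (DU U) \<and> card (DU U) = 2 ^ card U"
proof -
  let ?f = "\<lambda>\<omega>. restrict (\<lambda>i. the (\<omega> i)) U"
  let ?g = "\<lambda>s i. if i \<in> U then Some (s i) else None"
  have "bij_betw ?f (DU U) (PiE U (\<lambda>_. UNIV :: bit set))"
  proof (rule bij_betw_byWitness[where f'="?g"])
    show "\<forall>a\<in>DU U. ?g (?f a) = a"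
      by (auto simp: DU_def defects_def fun_eq_iff)
    show "\<forall>a'\<in>PiE U (\<lambda>_. UNIV). ?f (?g a') = a'"
      by (auto simp: PiE_def extensional_def fun_eq_iff)
    show "?f ` DU U \<subseteq> PiE U (\<lambda>_. UNIV)" by auto
    show "?g ` PiE U (\<lambda>_. UNIV) \<subseteq> DU U" by (auto simp: DU_def defects_def)
  qed
  moreover have "finite (PiE U (\<lambda>_. UNIV :: bit set))" using assms by (simp add: finite_PiE)
  moreover have "card (PiE U (\<lambda>_. UNIV :: bit set)) = 2 ^ card U"
    using assms by (simp add: card_PiE bit_card)
  ultimately show ?thesis by (metis bij_betw_finite bij_betw_same_card)
qed

lemma flip_count:
  fixes x0 :: "nat \<Rightarrow> bit" and c :: "nat \<Rightarrow> bit"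
  assumes U: "finite U" and i0: "i0 \<in> U" "x0 i0 = 1"
  shows "card {\<omega>\<in>DU U. (\<Sum>i\<in>U. x0 i * (c i + the (\<omega> i))) = 1} = 2 ^ (card U - 1)"
proof -
  define \<phi> where "\<phi> \<omega> = (\<Sum>i\<in>U. x0 i * (c i + the (\<omega> i)))" for \<omega>
  define F where "F \<omega> = fun_upd \<omega> i0 (Some (the (\<omega> i0) + 1))" for \<omega> :: "nat \<Rightarrow> bit option"
  have FD: "F \<omega> \<in> DU U" if "\<omega> \<in> DU U" for \<omega>
    using that i0 by (auto simp: F_def DU_def defects_def)
  have FF: "F (F \<omega>) = \<omega>" if "\<omega> \<in> DU U" for \<omega>
  proof -
    have "\<omega> i0 \<noteq> None" using that i0 by (auto simp: DU_def defects_def)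
    then show ?thesis by (auto simp: F_def fun_eq_iff add.assoc)
  qed
  have phiF: "\<phi> (F \<omega>) = \<phi> \<omega> + 1" for \<omega>
  proof -
    have "\<phi> (F \<omega>) = (\<Sum>i\<in>U. x0 i * (c i + the (\<omega> i)) + (if i = i0 then 1 else 0))"
      unfolding \<phi>_def by (rule sum.cong) (auto simp: F_def i0 distrib_left add.assoc)
    also have "\<dots> = \<phi> \<omega> + (\<Sum>i\<in>U. if i = i0 then 1 else 0)"
      unfolding \<phi>_def by (simp only: sum.distrib)
    also have "(\<Sum>i\<in>U. if i = i0 then (1::bit) else 0) = 1" using U i0 by simp
    finally show ?thesis .
  qed
  define P1 where "P1 = {\<omega>\<in>DU U. \<phi> \<omega> = 1}"
  define P0 where "P0 = {\<omega>\<in>DU U. \<phi> \<omega> = 0}"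
  have "bij_betw F P1 P0"
  proof (rule bij_betw_byWitness[where f'=F])
    show "\<forall>a\<in>P1. F (F a) = a" using FF by (auto simp: P1_def)
    show "\<forall>a\<in>P0. F (F a) = a" using FF by (auto simp: P0_def)
    show "F ` P1 \<subseteq> P0" using FD phiF by (auto simp: P1_def P0_def)
    show "F ` P0 \<subseteq> P1" using FD phiF by (auto simp: P1_def P0_def)
  qed
  then have eq: "card P1 = card P0" by (rule bij_betw_same_card)
  have un: "DU U = P1 \<union> P0" "P1 \<inter> P0 = {}"
    by (auto simp: P1_def P0_def)
  have fin: "finite (DU U)" "card (DU U) = 2 ^ card U" using card_DU[OF U] by auto
  have "card P1 + card P0 = 2 ^ card U"
    using fin un card_Un_disjoint[of P1 P0] by (metis finite_Un)
  moreover have "card U \<ge> 1" using U i0 by (metis One_nat_def Suc_leI card_gt_0_iff empty_iff)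
  ultimately have "card P1 = 2 ^ (card U - 1)"
  proof -
    assume a: "card P1 + card P0 = 2 ^ card U" "card U \<ge> 1"
    then obtain v where v: "card U = Suc v" by (cases "card U") auto
    have "(2::nat) ^ card U = 2 * 2 ^ v" using v by simp
    then show ?thesis using a(1) eq v by simp
  qed
  then show ?thesis unfolding P1_def \<phi>_def .
qed

lemma enc_DU:
  assumes U: "finite U" "U \<subseteq> {..<n}" and w: "\<omega> \<in> DU U"
  shows "encodable l k G0 G1 m \<omega> \<longleftrightarrow>
    (\<forall>x\<in>dual_code n l G0. {i. x i \<noteq> 0} \<subseteq> U \<longrightarrow>
       (\<Sum>i\<in>U. x i * ((\<Sum>j<k. G1 i j * m j) + the (\<omega> i))) = 0)"
proof -
  have "defects \<omega> = U" using w by (simp add: DU_def)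
  moreover have "(\<exists>d. \<forall>i\<in>U. (\<Sum>j<l. G0 i j * d j) = (\<Sum>j<k. G1 i j * m j) + the (\<omega> i)) \<longleftrightarrow>
    (\<forall>x\<in>dual_code n l G0. {i. x i \<noteq> 0} \<subseteq> U \<longrightarrow>
       (\<Sum>i\<in>U. x i * ((\<Sum>j<k. G1 i j * m j) + the (\<omega> i))) = 0)"
    by (rule enc_iff_U[OF U])
  ultimately show ?thesis
    using encodable_iff[of l k G0 G1 m \<omega>] by simp
qed

lemma fail_DU:
  assumes U: "finite U" "U \<subseteq> {..<n}"
    and cu: "card U \<le> dmin n l G0 + (dmin n l G0 - 1) div 2"
  shows "card {\<omega>\<in>DU U. \<not> encodable l k G0 G1 m \<omega>} =
    (if (\<exists>x\<in>dual_code n l G0. x \<noteq> (\<lambda>_. 0) \<and> {i. x i \<noteq> 0} \<subseteq> U) then 2 ^ (card U - 1) else 0)"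
proof (cases "\<exists>x\<in>dual_code n l G0. x \<noteq> (\<lambda>_. 0) \<and> {i. x i \<noteq> 0} \<subseteq> U")
  case False
  have "encodable l k G0 G1 m \<omega>" if "\<omega> \<in> DU U" for \<omega>
  proof -
    have "(\<Sum>i\<in>U. x i * ((\<Sum>j<k. G1 i j * m j) + the (\<omega> i))) = 0"
      if "x \<in> dual_code n l G0" "{i. x i \<noteq> 0} \<subseteq> U" for x
    proof -
      have "x = (\<lambda>_. 0)" using False that by blast
      then show ?thesis by simp
    qed
    then show ?thesis using enc_DU[OF U \<open>\<omega> \<in> DU U\<close>] by blast
  qed
  then have e: "{\<omega>\<in>DU U. \<not> encodable l k G0 G1 m \<omega>} = {}" by blast
  show ?thesis unfolding if_not_P[OF False] e by simp
next
  case True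
  then obtain x0 where x0: "x0 \<in> dual_code n l G0" "x0 \<noteq> (\<lambda>_. 0)" "{i. x0 i \<noteq> 0} \<subseteq> U" by blast
  then obtain i0 where i0: "x0 i0 \<noteq> 0" by blast
  then have i0U: "i0 \<in> U" "x0 i0 = 1" using x0(3) by auto
  let ?c = "\<lambda>i. \<Sum>j<k. G1 i j * m j"
  have "{\<omega>\<in>DU U. \<not> encodable l k G0 G1 m \<omega>} =
        {\<omega>\<in>DU U. (\<Sum>i\<in>U. x0 i * (?c i + the (\<omega> i))) = 1}"
  proof (intro Collect_cong conj_cong refl)
    fix \<omega> assume w: "\<omega> \<in> DU U"
    show "(\<not> encodable l k G0 G1 m \<omega>) = ((\<Sum>i\<in>U. x0 i * (?c i + the (\<omega> i))) = 1)"
    proof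
      assume "\<not> encodable l k G0 G1 m \<omega>"
      then obtain x where x: "x \<in> dual_code n l G0" "{i. x i \<noteq> 0} \<subseteq> U"
        "(\<Sum>i\<in>U. x i * (?c i + the (\<omega> i))) \<noteq> 0"
        using enc_DU[OF U w] by blast
      have "x \<noteq> (\<lambda>_. 0)" using x(3) by auto
      then have "x = x0" using unique_cw[OF U cu x(1) _ x(2) x0] by blast
      then show "(\<Sum>i\<in>U. x0 i * (?c i + the (\<omega> i))) = 1" using x(3) by simp
    next
      assume a: "(\<Sum>i\<in>U. x0 i * (?c i + the (\<omega> i))) = 1"
      show "\<not> encodable l k G0 G1 m \<omega>" using enc_DU[OF U w] x0 a by auto
    qed
  qed
  moreover have "card {\<omega>\<in>DU U. (\<Sum>i\<in>U. x0 i * (?c i + the (\<omega> i))) = 1} = 2 ^ (card U - 1)"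
    by (rule flip_count[OF U(1) i0U(1), of x0, OF i0U(2)])
  ultimately show ?thesis unfolding if_P[OF True] by simp
qed



lemma supersets:
  assumes S: "S \<subseteq> {..<n}" "card S \<le> u"
  shows "card {U. U \<subseteq> {..<n} \<and> card U = u \<and> S \<subseteq> U} = (n - card S) choose (u - card S)"
proof -
  have fS: "finite S" using S(1) finite_subset by blast
  have "bij_betw (\<lambda>U. U - S) {U. U \<subseteq> {..<n} \<and> card U = u \<and> S \<subseteq> U}
          {V. V \<subseteq> {..<n} - S \<and> card V = u - card S}"
  proof (rule bij_betw_byWitness[where f'="\<lambda>V. V \<union> S"])
    show "\<forall>a\<in>{U. U \<subseteq> {..<n} \<and> card U = u \<and> S \<subseteq> U}. a - S \<union> S = a" by auto
    show "\<forall>a'\<in>{V. V \<subseteq> {..<n} - S \<and> card V = u - card S}. a' \<union> S - S = a'" by auto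
    show "(\<lambda>U. U - S) ` {U. U \<subseteq> {..<n} \<and> card U = u \<and> S \<subseteq> U}
          \<subseteq> {V. V \<subseteq> {..<n} - S \<and> card V = u - card S}"
    proof clarify
      fix U assume "U \<subseteq> {..<n}" "S \<subseteq> U"
      then show "U - S \<subseteq> {..<n} - S \<and> card (U - S) = card U - card S"
        using fS by (auto intro: card_Diff_subset)
    qed
    show "(\<lambda>V. V \<union> S) ` {V. V \<subseteq> {..<n} - S \<and> card V = u - card S}
          \<subseteq> {U. U \<subseteq> {..<n} \<and> card U = u \<and> S \<subseteq> U}"
    proof (rule image_subsetI)
      fix V assume "V \<in> {V. V \<subseteq> {..<n} - S \<and> card V = u - card S}"
      then have V: "V \<subseteq> {..<n} - S" "card V = u - card S" by auto
      then have "finite V" using finite_subset by blast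
      then have "card (V \<union> S) = card V + card S" using V fS by (intro card_Un_disjoint) auto
      then show "V \<union> S \<in> {U. U \<subseteq> {..<n} \<and> card U = u \<and> S \<subseteq> U}"
        using V S by auto
    qed
  qed
  then have "card {U. U \<subseteq> {..<n} \<and> card U = u \<and> S \<subseteq> U} = card {V. V \<subseteq> {..<n} - S \<and> card V = u - card S}"
    by (rule bij_betw_same_card)
  also have "\<dots> = card ({..<n} - S) choose (u - card S)" by (rule n_subsets) simp
  also have "card ({..<n} - S) = n - card S" using S fS by (simp add: card_Diff_subset)
  finally show ?thesis .
qed

lemma hweight_0: "hweight n (\<lambda>_. 0) = 0" by (simp add: hweight_def)

lemma countN:
  assumes ne: "\<exists>x \<in> dual_code n l G0. x \<noteq> (\<lambda>_. 0)"
    and cu: "u \<le> dmin n l G0 + (dmin n l G0 - 1) div 2"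
  shows "card {U. U \<subseteq> {..<n} \<and> card U = u \<and>
            (\<exists>x\<in>dual_code n l G0. x \<noteq> (\<lambda>_. 0) \<and> {i. x i \<noteq> 0} \<subseteq> U)}
       = (\<Sum>w = dmin n l G0..u. Bw n l G0 w * ((n - w) choose (u - w)))"
proof -
  define X where "X = {x\<in>dual_code n l G0. x \<noteq> (\<lambda>_. 0) \<and> hweight n x \<le> u}"
  define T where "T x = {U. U \<subseteq> {..<n} \<and> card U = u \<and> {i. x i \<noteq> 0} \<subseteq> U}" for x :: "nat \<Rightarrow> bit"
  have inb: "x \<in> bvecs n" if "x \<in> dual_code n l G0" for x using that by (simp add: dual_code_def)
  have eq: "{U. U \<subseteq> {..<n} \<and> card U = u \<and>
            (\<exists>x\<in>dual_code n l G0. x \<noteq> (\<lambda>_. 0) \<and> {i. x i \<noteq> 0} \<subseteq> U)} = (\<Union>x\<in>X. T x)"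
  proof (rule set_eqI, rule iffI)
    fix U assume "U \<in> {U. U \<subseteq> {..<n} \<and> card U = u \<and>
            (\<exists>x\<in>dual_code n l G0. x \<noteq> (\<lambda>_. 0) \<and> {i. x i \<noteq> 0} \<subseteq> U)}"
    then obtain x where U: "U \<subseteq> {..<n}" "card U = u" and x: "x \<in> dual_code n l G0" "x \<noteq> (\<lambda>_. 0)" "{i. x i \<noteq> 0} \<subseteq> U"
      by blast
    have "finite U" using U(1) finite_subset by blast
    then have "card {i. x i \<noteq> 0} \<le> u" using x(3) U(2) card_mono by blast
    then have "x \<in> X" using x hweight_supp[OF inb[OF x(1)]] by (simp add: X_def)
    moreover have "U \<in> T x" using U x by (simp add: T_def)
    ultimately show "U \<in> (\<Union>x\<in>X. T x)" by blast
  next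
    fix U assume "U \<in> (\<Union>x\<in>X. T x)"
    then show "U \<in> {U. U \<subseteq> {..<n} \<and> card U = u \<and>
            (\<exists>x\<in>dual_code n l G0. x \<noteq> (\<lambda>_. 0) \<and> {i. x i \<noteq> 0} \<subseteq> U)}"
      by (auto simp: X_def T_def)
  qed
  have finX: "finite X" using finite_dual[of n l G0] by (simp add: X_def)
  have finT: "finite (T x)" for x
    by (rule finite_subset[of _ "Pow {..<n}"]) (auto simp: T_def)
  have disj: "\<forall>x\<in>X. \<forall>y\<in>X. x \<noteq> y \<longrightarrow> T x \<inter> T y = {}"
  proof (intro ballI impI)
    fix x y assume x: "x \<in> X" and y: "y \<in> X" and ne: "x \<noteq> y"
    show "T x \<inter> T y = {}"
    proof (rule ccontr)
      assume "T x \<inter> T y \<noteq> {}"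
      then obtain U where U: "U \<in> T x" "U \<in> T y" by blast
      then have U': "finite U" "U \<subseteq> {..<n}" "card U \<le> dmin n l G0 + (dmin n l G0 - 1) div 2"
        using cu finite_subset by (auto simp: T_def)
      have "x = y" using unique_cw[OF U'] x y U by (auto simp: X_def T_def)
      then show False using ne by simp
    qed
  qed
  have "card (\<Union>x\<in>X. T x) = (\<Sum>x\<in>X. card (T x))"
    using finX finT disj by (intro card_UN_disjoint) auto
  also have "\<dots> = (\<Sum>x\<in>X. (n - hweight n x) choose (u - hweight n x))"
  proof (rule sum.cong[OF refl])
    fix x assume x: "x \<in> X"
    then have xb: "x \<in> bvecs n" using inb by (simp add: X_def)
    show "card (T x) = (n - hweight n x) choose (u - hweight n x)"
      unfolding T_def hweight_supp[OF xb]
      by (rule supersets) (use x supp_bvecs[OF xb] hweight_supp[OF xb] in \<open>auto simp: X_def\<close>)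
  qed
  also have "\<dots> = (\<Sum>w\<in>{dmin n l G0..u}. \<Sum>x\<in>{x\<in>X. hweight n x = w}. (n - hweight n x) choose (u - hweight n x))"
  proof (rule sum.group[symmetric])
    show "finite X" by (rule finX)
    show "finite {dmin n l G0..u}" by simp
    show "hweight n ` X \<subseteq> {dmin n l G0..u}" using dmin_le by (auto simp: X_def)
  qed
  also have "\<dots> = (\<Sum>w\<in>{dmin n l G0..u}. Bw n l G0 w * ((n - w) choose (u - w)))"
  proof (rule sum.cong[OF refl])
    fix w assume w: "w \<in> {dmin n l G0..u}"
    have "1 \<le> dmin n l G0" using dmin_pos[OF ne] .
    then have "{x\<in>X. hweight n x = w} = {x \<in> dual_code n l G0. hweight n x = w}"
      using w hweight_0[of n] by (auto simp: X_def)
    then show "(\<Sum>x\<in>{x\<in>X. hweight n x = w}. (n - hweight n x) choose (u - hweight n x)) =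
      Bw n l G0 w * ((n - w) choose (u - w))"
      by (simp add: Bw_def)
  qed
  finally show ?thesis using eq by simp
qed



lemma pmf_cell:
  assumes "0 \<le> \<beta>" "\<beta> \<le> 1"
  shows "pmf (cell_pmf \<beta>) None = 1 - \<beta>" "pmf (cell_pmf \<beta>) (Some b) = \<beta> / 2"
proof -
  have u: "pmf (pmf_of_set (UNIV::bit set)) b = 1/2" for b
    by (simp add: bit_card)
  have "pmf (map_pmf Some (pmf_of_set (UNIV::bit set))) (Some b) = 1/2"
    by (simp add: pmf_map_inj' u)
  moreover have "pmf (map_pmf Some (pmf_of_set (UNIV::bit set))) None = 0"
    by (simp add: pmf_eq_0_set_pmf)
  ultimately show "pmf (cell_pmf \<beta>) None = 1 - \<beta>" "pmf (cell_pmf \<beta>) (Some b) = \<beta> / 2"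
    using assms by (simp_all add: cell_pmf_def pmf_bind)
qed

lemma prod_if_const:
  fixes a b :: real
  assumes "U \<subseteq> {0..<n}"
  shows "(\<Prod>i\<in>{0..<n}. if i \<in> U then a else b) = a ^ card U * b ^ (n - card U)"
proof -
  have fU: "finite U" using assms finite_subset by blast
  have "(\<Prod>i\<in>{0..<n}. if i \<in> U then a else b) = (\<Prod>i\<in>{0..<n} \<inter> {i. i \<in> U}. a) * (\<Prod>i\<in>{0..<n} \<inter> - {i. i \<in> U}. b)"
    by (rule prod.If_cases) simp
  also have "{0..<n} \<inter> {i. i \<in> U} = U" using assms by auto
  also have "{0..<n} \<inter> - {i. i \<in> U} = {0..<n} - U" by auto
  finally show ?thesis using assms fU by (simp add: card_Diff_subset)
qed

lemma pmf_defect: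
  assumes b: "0 \<le> \<beta>" "\<beta> \<le> 1" and w: "\<forall>i. i \<notin> {0..<n} \<longrightarrow> \<omega> i = None"
  shows "pmf (defect_pmf n \<beta>) \<omega> = (\<beta>/2) ^ card (defects \<omega>) * (1 - \<beta>) ^ (n - card (defects \<omega>))"
proof -
  have "pmf (defect_pmf n \<beta>) \<omega> = (\<Prod>i\<in>{0..<n}. pmf (cell_pmf \<beta>) (\<omega> i))"
    unfolding defect_pmf_def using w by (simp add: pmf_Pi)
  also have "\<dots> = (\<Prod>i\<in>{0..<n}. if i \<in> defects \<omega> then \<beta>/2 else 1 - \<beta>)"
    by (rule prod.cong) (auto simp: defects_def pmf_cell[OF b])
  also have "\<dots> = (\<beta>/2) ^ card (defects \<omega>) * (1 - \<beta>) ^ (n - card (defects \<omega>))"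
    by (rule prod_if_const) (use w in \<open>auto simp: defects_def\<close>)
  finally show ?thesis .
qed

lemma measure_defect:
  assumes "finite (X \<inter> {\<omega>. \<forall>i. i \<notin> {0..<n} \<longrightarrow> \<omega> i = None})"
  shows "measure_pmf.prob (defect_pmf n \<beta>) X =
     (\<Sum>\<omega>\<in>X \<inter> {\<omega>. \<forall>i. i \<notin> {0..<n} \<longrightarrow> \<omega> i = None}. pmf (defect_pmf n \<beta>) \<omega>)"
proof -
  let ?p = "defect_pmf n \<beta>"
  let ?O = "{\<omega>. \<forall>i. i \<notin> {0..<n} \<longrightarrow> \<omega> i = (None :: bit option)}"
  have sp: "set_pmf ?p \<subseteq> ?O" unfolding defect_pmf_def by (rule set_Pi_pmf_subset) simp
  have "measure_pmf.prob ?p X = measure_pmf.prob ?p (X \<inter> set_pmf ?p)" by (simp add: measure_Int_set_pmf)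
  also have "X \<inter> set_pmf ?p = (X \<inter> ?O) \<inter> set_pmf ?p" using sp by blast
  also have "measure_pmf.prob ?p \<dots> = measure_pmf.prob ?p (X \<inter> ?O)" by (simp add: measure_Int_set_pmf)
  also have "\<dots> = (\<Sum>\<omega>\<in>X \<inter> ?O. pmf ?p \<omega>)" using assms by (simp add: measure_measure_pmf_finite)
  finally show ?thesis .
qed



theorem lemma2:
  fixes n l k u :: nat and G0 G1 :: "nat \<Rightarrow> nat \<Rightarrow> bit" and m :: "nat \<Rightarrow> bit" and \<beta> :: real
  assumes "0 < \<beta>" and "\<beta> < 1"
    and "m \<in> bvecs k"
    and "\<exists>x \<in> dual_code n l G0. x \<noteq> (\<lambda>_. 0)"
    and "1 \<le> u" and "u \<le> dmin n l G0 + (dmin n l G0 - 1) div 2" and "u \<le> n"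
  shows "measure_pmf.prob (cond_pmf (defect_pmf n \<beta>) {\<omega>. card (defects \<omega>) = u})
            {\<omega>. \<not> encodable l k G0 G1 m \<omega>}
         = 1/2 * (\<Sum>w = dmin n l G0..u. real (Bw n l G0 w) * real ((n - w) choose (u - w)))
             / real (n choose u)"
proof -
  note ne = assms(4) and cu = assms(6)
  let ?p = "defect_pmf n \<beta>"
  define Om where "Om = {\<omega>. \<forall>i. i \<notin> {0..<n} \<longrightarrow> \<omega> i = (None :: bit option)}"
  define S where "S = {\<omega>::nat \<Rightarrow> bit option. card (defects \<omega>) = u}"
  define Fl where "Fl = {\<omega>. \<not> encodable l k G0 G1 m \<omega>}"
  define Subs where "Subs = {U. U \<subseteq> {..<n} \<and> card U = u}"
  define NU where "NU U \<longleftrightarrow> (\<exists>x\<in>dual_code n l G0. x \<noteq> (\<lambda>_. 0) \<and> {i. x i \<noteq> 0} \<subseteq> U)" for U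
  define c where "c = (\<beta>/2) ^ u * (1 - \<beta>) ^ (n - u)"
  define N where "N = (\<Sum>w = dmin n l G0..u. Bw n l G0 w * ((n - w) choose (u - w)))"
  have finSubs: "finite Subs" by (rule finite_subset[of _ "Pow {..<n}"]) (auto simp: Subs_def)
  have SubsU: "finite U" "U \<subseteq> {..<n}" "card U = u" if "U \<in> Subs" for U
    using that finite_subset by (auto simp: Subs_def)
  have defO: "defects \<omega> \<subseteq> {..<n}" if "\<omega> \<in> Om" for \<omega>
    using that by (auto simp: Om_def defects_def)
  have SO: "X \<inter> S \<inter> Om = (\<Union>U\<in>Subs. {\<omega>\<in>DU U. \<omega> \<in> X})" for X
  proof (rule set_eqI, rule iffI)
    fix \<omega> assume w: "\<omega> \<in> X \<inter> S \<inter> Om"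
    then have "defects \<omega> \<in> Subs" using defO by (auto simp: Subs_def S_def)
    moreover have "\<omega> \<in> DU (defects \<omega>)" by (simp add: DU_def)
    ultimately show "\<omega> \<in> (\<Union>U\<in>Subs. {\<omega>\<in>DU U. \<omega> \<in> X})" using w by blast
  next
    fix \<omega> assume "\<omega> \<in> (\<Union>U\<in>Subs. {\<omega>\<in>DU U. \<omega> \<in> X})"
    then obtain U where U: "U \<in> Subs" "defects \<omega> = U" "\<omega> \<in> X" by (auto simp: DU_def)
    have "\<omega> i = None" if "i \<notin> {0..<n}" for i
      using U that SubsU[OF U(1)] by (auto simp: defects_def)
    then show "\<omega> \<in> X \<inter> S \<inter> Om" using U SubsU[OF U(1)] by (auto simp: S_def Om_def)
  qed
  have cardSO: "finite (X \<inter> S \<inter> Om) \<and> card (X \<inter> S \<inter> Om) = (\<Sum>U\<in>Subs. card {\<omega>\<in>DU U. \<omega> \<in> X})" for X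
  proof -
    have finD: "finite {\<omega>\<in>DU U. \<omega> \<in> X}" if "U \<in> Subs" for U
      using card_DU[OF SubsU(1)[OF that]] by simp
    have "card (\<Union>U\<in>Subs. {\<omega>\<in>DU U. \<omega> \<in> X}) = (\<Sum>U\<in>Subs. card {\<omega>\<in>DU U. \<omega> \<in> X})"
      by (rule card_UN_disjoint) (use finSubs finD in \<open>auto simp: DU_def\<close>)
    then show ?thesis unfolding SO using finSubs finD by auto
  qed
  have cS: "card (UNIV \<inter> S \<inter> Om) = (n choose u) * 2 ^ u"
  proof -
    have "card (UNIV \<inter> S \<inter> Om) = (\<Sum>U\<in>Subs. card (DU U))" using cardSO[of UNIV] by simp
    also have "\<dots> = (\<Sum>U\<in>Subs. 2 ^ u)" using card_DU SubsU by (intro sum.cong) auto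
    also have "\<dots> = card Subs * 2 ^ u" by simp
    also have "card Subs = n choose u" unfolding Subs_def using n_subsets[of "{..<n}" u] by simp
    finally show ?thesis .
  qed
  have cF: "card (Fl \<inter> S \<inter> Om) = N * 2 ^ (u - 1)"
  proof -
    have "card (Fl \<inter> S \<inter> Om) = (\<Sum>U\<in>Subs. card {\<omega>\<in>DU U. \<omega> \<in> Fl})" using cardSO[of Fl] by simp
    also have "\<dots> = (\<Sum>U\<in>Subs. if NU U then 2 ^ (u - 1) else 0)"
    proof (rule sum.cong[OF refl])
      fix U assume U: "U \<in> Subs"
      show "card {\<omega>\<in>DU U. \<omega> \<in> Fl} = (if NU U then 2 ^ (u - 1) else 0)"
        using fail_DU[OF SubsU(1,2)[OF U], of l G0 k G1 m] SubsU(3)[OF U] cu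
        unfolding Fl_def NU_def by simp
    qed
    also have "\<dots> = (\<Sum>U\<in>{U\<in>Subs. NU U}. 2 ^ (u - 1))"
      by (rule sum.inter_filter[symmetric]) (rule finSubs)
    also have "\<dots> = card {U\<in>Subs. NU U} * 2 ^ (u - 1)" by simp
    also have "card {U\<in>Subs. NU U} = N"
      unfolding N_def using countN[OF ne cu] by (simp add: Subs_def NU_def conj_assoc)
    finally show ?thesis .
  qed
  have b01: "0 \<le> \<beta>" "\<beta> \<le> 1" using assms(1,2) by auto
  have cpos: "c > 0" unfolding c_def using assms(1,2) by simp
  have measX: "measure_pmf.prob ?p (X \<inter> S) = card (X \<inter> S \<inter> Om) * c" for X
  proof -
    have "measure_pmf.prob ?p (X \<inter> S) = (\<Sum>\<omega>\<in>X \<inter> S \<inter> Om. pmf ?p \<omega>)"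
      using measure_defect[of "X \<inter> S" n \<beta>] cardSO[of X] unfolding Om_def by simp
    also have "\<dots> = (\<Sum>\<omega>\<in>X \<inter> S \<inter> Om. c)"
    proof (rule sum.cong[OF refl])
      fix \<omega> assume "\<omega> \<in> X \<inter> S \<inter> Om"
      then show "pmf ?p \<omega> = c" using pmf_defect[OF b01, of n \<omega>] by (simp add: Om_def S_def c_def)
    qed
    finally show ?thesis by simp
  qed
  have mS: "measure_pmf.prob ?p S = real ((n choose u) * 2 ^ u) * c"
    using measX[of UNIV] cS by simp
  have mSpos: "measure_pmf.prob ?p S > 0"
    unfolding mS using cpos assms(7) by simp
  have nonempty: "set_pmf ?p \<inter> S \<noteq> {}"
  proof
    assume "set_pmf ?p \<inter> S = {}"
    then have "measure_pmf.prob ?p (S \<inter> set_pmf ?p) = 0" by (simp add: Int_commute)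
    then show False using mSpos by (simp add: measure_Int_set_pmf)
  qed
  have "measure_pmf.prob (cond_pmf ?p S) Fl = measure (uniform_measure (measure_pmf ?p) S) Fl"
    using cond_pmf.rep_eq[OF nonempty] by simp
  also have "\<dots> = measure_pmf.prob ?p (S \<inter> Fl) / measure_pmf.prob ?p S"
  proof (rule measure_uniform_measure)
    show "emeasure (measure_pmf ?p) S \<noteq> 0" using mSpos by (simp add: measure_pmf.emeasure_eq_measure)
    show "emeasure (measure_pmf ?p) S \<noteq> \<infinity>" by (simp add: measure_pmf.emeasure_eq_measure)
  qed simp
  also have "measure_pmf.prob ?p (S \<inter> Fl) = real (N * 2 ^ (u - 1)) * c"
    using measX[of Fl] cF by (simp add: Int_commute)
  finally have "measure_pmf.prob (cond_pmf ?p S) Fl = real (N * 2 ^ (u - 1)) * c / (real ((n choose u) * 2 ^ u) * c)"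
    unfolding mS .
  also have "\<dots> = 1/2 * real N / real (n choose u)"
  proof -
    obtain v where v: "u = Suc v" using assms(5) by (cases u) auto
    show ?thesis using cpos unfolding v by (simp add: field_simps)
  qed
  also have "real N = (\<Sum>w = dmin n l G0..u. real (Bw n l G0 w) * real ((n - w) choose (u - w)))"
    unfolding N_def by simp
  finally show ?thesis unfolding S_def Fl_def .
qed

end
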